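(* Let $\mu=4m^2>0$ and let $\mathcal{M}(\tilde z,a)$ be the crossing-symmetric $2\to2$ scattering amplitude of identical scalars of mass $m$ in a unitary theory, admitting the crossing-symmetric dispersive representation and the power series expansion described in the context. Then for every real $a\in\left(-\frac{2\mu}{9},0\right)\cup\left(0,\frac{4\mu}{9}\right)$, $\alpha_1(a)\neq 0$ and $$\left|\frac{\alpha_n(a)\,a^{2n}}{\alpha_1(a)\,a^2}\right|\le n\qquad\text{for all } n\ge 2.$$
   Context: Shifted Mandelstam variables $s_1=s-\mu/3$, $s_2=t-\mu/3$, $s_3=u-\mu/3$ satisfy $s_1+s_2+s_3=0$. Crossing-symmetric variables $(z,a)$, $a$ real, are defined by $s_k=a-\frac{a(z-z_k)^3}{z^3-1}$, $k=1,2,3$, with $z_k$ the cube roots of unity, and $\tilde z=z^3$. The amplitude, written as $\mathcal{M}(\tilde z,a)$, is assumed to satisfy $$\mathcal{M}(\tilde z,a)=\alpha_0+\frac1\pi\int_{2\mu/3}^\infty\frac{ds_1'}{s_1'}\,\mathcal{A}\left(s_1';s_2^{(+)}(s_1',a)\right)H(s_1',\tilde z),$$ where $\alpha_0=\mathcal{M}(0,a)$, $H(s_1',\tilde z)=\frac{27a^2\tilde z(2s_1'-3a)}{27a^3\tilde z-27a^2\tilde z s_1'-(1-\tilde z)^2(s_1')^3}$, $s_2^{(+)}(s_1',a)=-\frac{s_1'}{2}\left[1-\left(\frac{s_1'+3a}{s_1'-a}\right)^{1/2}\right]$, and $\mathcal{A}(s_1;s_2)$ is the $s$-channel absorptive part;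 and $\mathcal{M}$ has a power series $\mathcal{M}(\tilde z,a)=\sum_{n\ge0}\alpha_n(a)a^{2n}\tilde z^n$ converging on $|\tilde z|<1$. Unitarity means: $\mathcal{A}\left(s_1;s_2^{(+)}(s_1,a)\right)=\Phi(s_1;\alpha)\sum_{\ell\ge0}(2\ell+2\alpha)a_\ell(s_1)C_\ell^{(\alpha)}\left(\sqrt{\xi(s_1,a)}\right)$ with $\alpha=(d-3)/2$ ($d$ the spacetime dimension), $\Phi>0$, $C_\ell^{(\alpha)}$ Gegenbauer polynomials, $\xi(s_1,a)=\left(1+\frac{2s_2^{(+)}(s_1,a)+2\mu/3}{s_1-2\mu/3}\right)^2$, and $0\le a_\ell(s_1)\le1$ for $s_1\ge2\mu/3$. *)

theory Defs
  imports "HOL-Analysis.Analysis"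
begin

text \<open>Gegenbauer polynomial C_n^(alpha)(x), explicit formula
  sum_{k=0}^{n div 2} (-1)^k Gamma(n-k+alpha)/(Gamma(alpha) k! (n-2k)!) (2x)^(n-2k),
  with Gamma(n-k+alpha)/Gamma(alpha) written as a Pochhammer symbol.\<close>
definition gegenbauer :: "nat \<Rightarrow> real \<Rightarrow> real \<Rightarrow> real" where
  "gegenbauer n \<alpha> x =
     (\<Sum>k\<le>n div 2. (-1) ^ k * pochhammer \<alpha> (n - k)
        / (fact k * fact (n - 2 * k)) * (2 * x) ^ (n - 2 * k))"

definition s2plus :: "real \<Rightarrow> real \<Rightarrow> real" where
  "s2plus s a = - (s / 2) * (1 - sqrt ((s + 3 * a) / (s - a)))"

definition xi :: "real \<Rightarrow> real \<Rightarrow> real \<Rightarrow> real" where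
  "xi \<mu> s a = (1 + (2 * s2plus s a + 2 * \<mu> / 3) / (s - 2 * \<mu> / 3)) ^ 2"

definition Hker :: "real \<Rightarrow> real \<Rightarrow> complex \<Rightarrow> complex" where
  "Hker a s z = (27 * of_real (a ^ 2) * z * of_real (2 * s - 3 * a))
      / (27 * of_real (a ^ 3) * z - 27 * of_real (a ^ 2) * z * of_real s
         - (1 - z) ^ 2 * of_real (s ^ 3))"

end

theory Submission
  imports Defs "HOL-Complex_Analysis.Complex_Analysis"
begin


definition Bt :: "real \<Rightarrow> real \<Rightarrow> nat \<Rightarrow> nat \<Rightarrow> real" where
  "Bt \<alpha> x n k = (if 2 * k \<le> n then (-1) ^ k * pochhammer \<alpha> (n - k)
        / (fact k * fact (n - 2 * k)) * (2 * x) ^ (n - 2 * k) else 0)"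

lemma geg_ext:
  assumes "n div 2 \<le> N"
  shows "gegenbauer n \<alpha> x = (\<Sum>k\<le>N. Bt \<alpha> x n k)"
proof -
  have "(\<Sum>k\<le>N. Bt \<alpha> x n k) = (\<Sum>k\<le>n div 2. Bt \<alpha> x n k)"
    by (rule sum.mono_neutral_right) (use assms in \<open>auto simp: Bt_def\<close>)
  also have "\<dots> = gegenbauer n \<alpha> x"
    unfolding gegenbauer_def by (rule sum.cong) (auto simp: Bt_def)
  finally show ?thesis by simp
qed

lemma Bt_rec:
  "real (n + 2) * Bt \<alpha> x (n + 2) k =
     2 * x * (real n + 1 + \<alpha>) * Bt \<alpha> x (n + 1) k
     - (real n + 2 * \<alpha>) * (if k = 0 then 0 else Bt \<alpha> x n (k - 1))"
proof (cases k)
  case 0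
  have p: "pochhammer \<alpha> (n + 2) = pochhammer \<alpha> (n + 1) * (\<alpha> + real n + 1)"
    by (simp add: pochhammer_Suc[of \<alpha> "n+1", simplified] add.commute)
  have f: "(fact (n + 2) :: real) = real (n + 2) * fact (n + 1)"
    by (simp add: fact_Suc[of "n+1", simplified] add.commute)
  have w: "(2 * x) ^ (n + 2) = 2 * x * (2 * x) ^ (n + 1)" by simp
  have b2: "Bt \<alpha> x (n+2) 0 = pochhammer \<alpha> (n+2) / fact (n+2) * (2*x)^(n+2)"
    and b1: "Bt \<alpha> x (n+1) 0 = pochhammer \<alpha> (n+1) / fact (n+1) * (2*x)^(n+1)"
    by (simp_all add: Bt_def)
  have ab: "\<And>P F X::real. F \<noteq> 0 \<Longrightarrow> real (n+2) * (P * (\<alpha> + real n + 1) / (real (n+2) * F) * (2*x*X))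
     = 2 * x * (real n + 1 + \<alpha>) * (P / F * X)"
  proof -
    fix P F X :: real assume "F \<noteq> 0"
    moreover have "real n + 2 \<noteq> 0" by linarith
    ultimately have "F * real n + F * 2 \<noteq> 0"
      by (metis distrib_left mult_eq_0_iff)
    with \<open>F \<noteq> 0\<close> show "real (n+2) * (P * (\<alpha> + real n + 1) / (real (n+2) * F) * (2*x*X))
     = 2 * x * (real n + 1 + \<alpha>) * (P / F * X)" by (simp add: field_simps)
  qed
  show ?thesis using 0
    apply (simp only: b1 b2 p f w)
    apply (subst ab[OF fact_nonzero])
    apply simp
    done
next
  case (Suc j)
  consider "2 * j + 1 \<le> n" | "n = 2 * j" | "n < 2 * j" by linarith
  then show ?thesis
  proof cases
    case 1
    then obtain r where r: "n = 2 * j + 1 + r" using le_Suc_ex by blast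
    have e1: "n + 2 - Suc j = Suc (Suc (j + r))" and e2: "n + 2 - 2 * Suc j = Suc r"
      and e3: "n + 1 - Suc j = Suc (j + r)" and e4: "n + 1 - 2 * Suc j = r"
      and e5: "n - j = Suc (j + r)" and e6: "n - 2 * j = Suc r" using r by auto
    have v1: "Bt \<alpha> x (n+2) k = (-1)^(j+1) * pochhammer \<alpha> (j+r+2) / (fact (j+1) * fact (r+1)) * (2*x)^(r+1)"
      using Suc r by (simp add: Bt_def e1 e2 add.commute)
    have v2: "Bt \<alpha> x (n+1) k = (-1)^(j+1) * pochhammer \<alpha> (j+r+1) / (fact (j+1) * fact r) * (2*x)^r"
      using Suc r by (simp add: Bt_def e3 e4 add.commute)
    have v3: "(if k = 0 then 0 else Bt \<alpha> x n (k - 1)) = (-1)^j * pochhammer \<alpha> (j+r+1) / (fact j * fact (r+1)) * (2*x)^(r+1)"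
      using Suc r by (simp add: Bt_def e5 e6 add.commute)
    have p: "pochhammer \<alpha> (j+r+2) = pochhammer \<alpha> (j+r+1) * (\<alpha> + real j + real r + 1)"
      by (simp add: pochhammer_Suc[of \<alpha> "j+r+1", simplified] add.commute add.left_commute)
    have f1: "(fact (j+1) :: real) = (real j + 1) * fact j" by simp
    have f2: "(fact (r+1) :: real) = (real r + 1) * fact r" by simp
    have w: "(2*x)^(r+1) = 2*x*(2*x)^r" by simp
    have sg: "(-1::real)^(j+1) = - ((-1)^j)" by simp
    have nn: "real n = 2 * real j + 1 + real r" using r by simp
    have ab0: "\<And>S P A B X J R::real. A \<noteq> 0 \<Longrightarrow> B \<noteq> 0 \<Longrightarrow> J \<noteq> 0 \<Longrightarrow> R \<noteq> 0 \<Longrightarrow>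
      (2 * J + R) * (- S * (P * (\<alpha> + J + R - 1)) / (J * A * (R * B)) * (2*x*X))
      = 2 * x * (2 * J + R - 1 + \<alpha>) * (- S * P / (J * A * B) * X)
        - (2 * J + R - 2 + 2 * \<alpha>) * (S * P / (A * (R * B)) * (2*x*X))"
      by (simp add: field_simps)
    have ab: "\<And>S P A B X::real. A \<noteq> 0 \<Longrightarrow> B \<noteq> 0 \<Longrightarrow>
      (2 * real j + 1 + real r + 2) * (- S * (P * (\<alpha> + real j + real r + 1)) / ((real j + 1) * A * ((real r + 1) * B)) * (2*x*X))
      = 2 * x * (2 * real j + 1 + real r + 1 + \<alpha>) * (- S * P / ((real j + 1) * A * B) * X)
        - (2 * real j + 1 + real r + 2 * \<alpha>) * (S * P / (A * ((real r + 1) * B)) * (2*x*X))"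
    proof -
      fix S P A B X :: real assume A: "A \<noteq> 0" and B: "B \<noteq> 0"
      have j: "real j + 1 \<noteq> 0" and rr: "real r + 1 \<noteq> 0" by linarith+
      from ab0[OF A B j rr, of S P X] show "?thesis S P A B X"
        by (simp add: algebra_simps)
    qed
    show ?thesis
      apply (simp only: v1 v2 v3 p f1 f2 w sg nn of_nat_add of_nat_numeral)
      apply (rule ab) apply simp_all
      done
  next
    case 2
    have v1: "Bt \<alpha> x (n+2) k = (-1)^(j+1) * pochhammer \<alpha> (j+1) / fact (j+1)"
      using Suc 2 by (simp add: Bt_def)
    have v2: "Bt \<alpha> x (n+1) k = 0" using Suc 2 by (simp add: Bt_def)
    have v3: "(if k = 0 then 0 else Bt \<alpha> x n (k - 1)) = (-1)^j * pochhammer \<alpha> j / fact j"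
      using Suc 2 by (simp add: Bt_def)
    have p: "pochhammer \<alpha> (j+1) = pochhammer \<alpha> j * (\<alpha> + real j)"
      by (simp add: pochhammer_Suc)
    have f1: "(fact (j+1) :: real) = (real j + 1) * fact j" by simp
    have sg: "(-1::real)^(j+1) = - ((-1)^j)" by simp
    have nn: "real n = 2 * real j" using 2 by simp
    have ab0: "\<And>S P F J::real. F \<noteq> 0 \<Longrightarrow> J \<noteq> 0 \<Longrightarrow>
       (2 * (J - 1) + 2) * (- S * (P * (\<alpha> + (J - 1))) / (J * F)) = - (2 * (J - 1) + 2 * \<alpha>) * (S * P / F)"
      by (simp add: field_simps)
    have j: "real j + 1 \<noteq> 0" by linarith
    show ?thesis
      apply (simp only: v1 v2 v3 p f1 sg nn of_nat_add of_nat_numeral)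
      using ab0[OF fact_nonzero j, of "(-1)^j" "pochhammer \<alpha> j"]
      by (simp add: algebra_simps)
  next
    case 3
    then show ?thesis using Suc by (simp add: Bt_def)
  qed
qed

lemma geg_rec:
  "real (n + 2) * gegenbauer (n + 2) \<alpha> x =
     2 * x * (real n + 1 + \<alpha>) * gegenbauer (n + 1) \<alpha> x - (real n + 2 * \<alpha>) * gegenbauer n \<alpha> x"
proof -
  have g2: "gegenbauer (n + 2) \<alpha> x = (\<Sum>k\<le>Suc (n+2). Bt \<alpha> x (n+2) k)"
    by (rule geg_ext) simp
  have g1: "gegenbauer (n + 1) \<alpha> x = (\<Sum>k\<le>Suc (n+2). Bt \<alpha> x (n+1) k)"
    by (rule geg_ext) simp
  have "gegenbauer n \<alpha> x = (\<Sum>k\<le>n+2. Bt \<alpha> x n k)"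
    by (rule geg_ext) simp
  also have "\<dots> = (\<Sum>k\<le>Suc (n+2). (if k = 0 then 0 else Bt \<alpha> x n (k - 1)))"
    by (subst sum.atMost_Suc_shift) simp
  finally have g0: "gegenbauer n \<alpha> x = (\<Sum>k\<le>Suc (n+2). (if k = 0 then 0 else Bt \<alpha> x n (k - 1)))" .
  show ?thesis
    unfolding g0 g1 g2 sum_distrib_left sum_subtractf[symmetric]
    by (rule sum.cong[OF refl]) (rule Bt_rec)
qed

lemma geg_0: "gegenbauer 0 \<alpha> x = 1"
  by (simp add: gegenbauer_def)

lemma geg_1: "gegenbauer 1 \<alpha> x = 2 * \<alpha> * x"
  by (simp add: gegenbauer_def)

lemma geg_mono_nonneg:
  assumes x: "x \<ge> 1" and al: "\<alpha> \<ge> 1/2"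
  shows "0 \<le> gegenbauer n \<alpha> x \<and> gegenbauer n \<alpha> x \<le> gegenbauer (n + 1) \<alpha> x"
proof (induction n)
  case 0
  have "1 \<le> 2 * \<alpha> * x"
  proof -
    have "1 \<le> 2 * \<alpha>" using al by simp
    also have "\<dots> \<le> 2 * \<alpha> * x" using x al by simp
    finally show ?thesis .
  qed
  then show ?case using geg_1[of \<alpha> x] by (simp add: geg_0)
next
  case (Suc n)
  let ?G = "\<lambda>n. gegenbauer n \<alpha> x"
  have h0: "0 \<le> ?G n" and h1: "?G n \<le> ?G (n+1)" using Suc by auto
  have a: "2 * (real n + 1 + \<alpha>) * ?G (n+1) \<le> 2 * x * (real n + 1 + \<alpha>) * ?G (n+1)"
    using x al h0 h1 by (intro mult_right_mono) auto
  have b: "(real n + 2 * \<alpha>) * ?G n \<le> (real n + 2 * \<alpha>) * ?G (n+1)"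
    using al h1 by (intro mult_left_mono) auto
  have "real (n + 2) * ?G (n+1) \<le> real (n+2) * ?G (n+2)"
    using a b geg_rec[of n \<alpha> x] by (simp add: algebra_simps)
  then have "?G (n+1) \<le> ?G (n+2)" by (simp del: of_nat_add)
  then show ?case using h0 h1 by simp
qed

lemma geg_nonneg: "x \<ge> 1 \<Longrightarrow> \<alpha> \<ge> 1/2 \<Longrightarrow> 0 \<le> gegenbauer n \<alpha> x"
  using geg_mono_nonneg by blast



lemma gen_fun:
  fixes w v z :: complex
  assumes w: "norm w \<le> 1" and v: "norm v \<le> 1" and z: "norm z < 1"
  shows "(\<lambda>n. (\<Sum>i\<le>n. w^i * v^(n-i)) * z^n) sums (1 / ((1 - w * z) * (1 - v * z)))"
proof -
  have "norm w * norm z \<le> 1 * norm z" using w by (intro mult_right_mono) auto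
  then have wz: "norm (w * z) < 1" using z by (simp add: norm_mult)
  have "norm v * norm z \<le> 1 * norm z" using v by (intro mult_right_mono) auto
  then have vz: "norm (v * z) < 1" using z by (simp add: norm_mult)
  have sa: "summable (\<lambda>k. norm ((w * z)^k))"
    using wz by (simp add: norm_power summable_geometric)
  have sb: "summable (\<lambda>k. norm ((v * z)^k))"
    using vz by (simp add: norm_power summable_geometric)
  have "(\<lambda>k. \<Sum>i\<le>k. (w * z)^i * (v * z)^(k-i)) sums ((\<Sum>k. (w * z)^k) * (\<Sum>k. (v * z)^k))"
    by (rule Cauchy_product_sums[OF sa sb])
  moreover have "(\<Sum>k. (w * z)^k) = 1 / (1 - w * z)" using suminf_geometric[OF wz] by simp
  moreover have "(\<Sum>k. (v * z)^k) = 1 / (1 - v * z)" using suminf_geometric[OF vz] by simp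
  moreover have "\<And>k. (\<Sum>i\<le>k. (w * z)^i * (v * z)^(k-i)) = (\<Sum>i\<le>k. w^i * v^(k-i)) * z^k"
  proof -
    fix k
    have "(\<Sum>i\<le>k. (w * z)^i * (v * z)^(k-i)) = (\<Sum>i\<le>k. w^i * v^(k-i) * z^k)"
    proof (rule sum.cong[OF refl])
      fix i assume "i \<in> {..k}"
      then have "z^i * z^(k-i) = z^k" by (simp add: power_add[symmetric])
      then show "(w * z)^i * (v * z)^(k-i) = w^i * v^(k-i) * z^k"
        by (simp add: power_mult_distrib algebra_simps)
    qed
    then show "?thesis k" by (simp add: sum_distrib_right)
  qed
  ultimately show ?thesis by simp
qed

lemma cc_bound:
  fixes w v :: complex
  assumes w: "norm w \<le> 1" and v: "norm v \<le> 1"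
  shows "norm (\<Sum>i\<le>n. w^i * v^(n-i)) \<le> real n + 1"
proof -
  have "norm (\<Sum>i\<le>n. w^i * v^(n-i)) \<le> (\<Sum>i\<le>n. norm (w^i * v^(n-i)))"
    by (rule norm_sum)
  also have "\<dots> \<le> (\<Sum>i\<le>n. (1::real))"
  proof (rule sum_mono)
    fix i
    show "norm (w^i * v^(n-i)) \<le> 1" using w v
      by (simp add: norm_mult norm_power power_le_one mult_le_one)
  qed
  finally show ?thesis by simp
qed

lemma powser_unique:
  fixes a b :: "nat \<Rightarrow> complex"
  assumes ha: "\<And>z. norm z < 1 \<Longrightarrow> (\<lambda>n. a n * z^n) sums f z"
    and hb: "\<And>z. norm z < 1 \<Longrightarrow> (\<lambda>n. b n * z^n) sums f z"
  shows "a n = b n"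
proof (rule ccontr)
  assume ne: "a n \<noteq> b n"
  define d where "d n = a n - b n" for n
  have hd: "(\<lambda>n. d n * (z - 0)^n) sums ((\<lambda>_. 0::complex) z)" if "norm (z - 0) < 1" for z
  proof -
    have "norm z < 1" using that by simp
    then have "(\<lambda>n. a n * z^n - b n * z^n) sums (f z - f z)" by (intro sums_diff ha hb)
    then show ?thesis by (simp add: d_def algebra_simps)
  qed
  show False
  proof (cases "n = 0")
    case True
    have "(\<lambda>n. d n * 0^n) sums 0" using hd[of 0] by simp
    then have "d 0 = 0" by simp
    then show False using ne True by (simp add: d_def)
  next
    case False
    have "d n \<noteq> 0" using ne by (simp add: d_def)
    show False
    proof (rule powser_0_nonzero[where r=1 and a=d and \<xi>=0 and f="\<lambda>_. 0" and m=n])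
      fix s :: real assume "0 < s" and H: "\<And>z::complex. z \<in> cball 0 s - {0} \<Longrightarrow> (\<lambda>_. 0::complex) z \<noteq> 0"
      show False using H[of "complex_of_real s"] \<open>0 < s\<close> by simp
    qed (use hd \<open>d n \<noteq> 0\<close> False in auto)
  qed
qed



lemma x_bounds:
  fixes a s :: real
  assumes s: "s > 0" and sa: "s + 3 * a > 0"
  shows "0 \<le> 27 * a^2 * (s - a) / s^3 \<or> a \<ge> s" "27 * a^2 * (s - a) / s^3 \<le> 4"
proof -
  show "0 \<le> 27 * a^2 * (s - a) / s^3 \<or> a \<ge> s"
    using s by (cases "a \<ge> s") (auto intro!: divide_nonneg_pos mult_nonneg_nonneg)
  have e: "4 * s^3 - 27 * a^2 * (s - a) = (3 * a - 2 * s)^2 * (3 * a + s)"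
    by (simp add: algebra_simps power2_eq_square power3_eq_cube)
  have "(3 * a - 2 * s)^2 * (3 * a + s) \<ge> 0" using sa by simp
  then have "27 * a^2 * (s - a) \<le> 4 * s^3" using e by linarith
  then show "27 * a^2 * (s - a) / s^3 \<le> 4" using s by (simp add: divide_le_eq)
qed

lemma xi_ge1:
  fixes \<mu> a s :: real
  assumes mu: "\<mu> > 0" and a1: "a > -(2 * \<mu> / 9)" and a2: "a < 4 * \<mu> / 9"
    and s: "s \<ge> 2 * \<mu> / 3"
  shows "sqrt (xi \<mu> s a) \<ge> 1"
proof -
  define p where "p = 2 * \<mu> / 3"
  have p: "p > 0" "s \<ge> p" "a > - p / 3" using mu s a1 by (auto simp: p_def)
  have spos: "s > 0" "s - a > 0" "s + 3 * a > 0" using p a2 by (auto simp: p_def)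
  define E where "E = (s + 3 * a) * s^2 - (s - p)^2 * (s - a)"
  have E: "E = (s - p) * (2 * p * s/3 + p^2/3) + (a + p/3) * (3 * s^2 + (s - p)^2)"
    by (simp add: E_def field_simps power2_eq_square)
  have h1: "(s - p) * (2 * p * s/3 + p^2/3) \<ge> 0"
    by (rule mult_nonneg_nonneg) (use p in auto)
  have h2: "(a + p/3) * (3 * s^2 + (s - p)^2) \<ge> 0"
    by (rule mult_nonneg_nonneg) (use p in auto)
  have "E \<ge> 0" unfolding E using h1 h2 by linarith
  then have "(s - p)^2 * (s - a) \<le> (s + 3 * a) * s^2" by (simp add: E_def)
  then have "((s - p) / s)^2 \<le> (s + 3 * a) / (s - a)"
    using spos by (simp add: power_divide divide_le_eq le_divide_eq mult.commute)
  then have "sqrt (((s - p) / s)^2) \<le> sqrt ((s + 3 * a) / (s - a))"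
    by (rule real_sqrt_le_mono)
  moreover have "sqrt (((s - p) / s)^2) = (s - p) / s" using p spos by simp
  ultimately have sq: "(s - p) / s \<le> sqrt ((s + 3 * a) / (s - a))" by simp
  have "s2plus s a = s / 2 * (sqrt ((s + 3 * a) / (s - a)) - 1)"
    by (simp add: s2plus_def algebra_simps)
  also have "\<dots> \<ge> s / 2 * ((s - p) / s - 1)"
    using sq spos by (intro mult_left_mono) auto
  finally have "s2plus s a \<ge> - p / 2" using spos by (simp add: field_simps)
  then have q: "2 * s2plus s a + 2 * \<mu> / 3 \<ge> 0" by (simp add: p_def)
  have "(2 * s2plus s a + 2 * \<mu> / 3) / (s - 2 * \<mu> / 3) \<ge> 0"
    using q s by (intro divide_nonneg_nonneg) auto
  then have y: "1 + (2 * s2plus s a + 2 * \<mu> / 3) / (s - 2 * \<mu> / 3) \<ge> 1" by simp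
  have "sqrt (xi \<mu> s a) = \<bar>1 + (2 * s2plus s a + 2 * \<mu> / 3) / (s - 2 * \<mu> / 3)\<bar>"
    by (simp add: xi_def)
  then show ?thesis using y by simp
qed

lemma Hker_eq:
  fixes a s :: real and z :: complex
  assumes s: "s \<noteq> 0"
  shows "Hker a s z = - of_real (27 * a^2 * (2 * s - 3 * a) / s^3) * z /
     (1 - 2 * of_real (1 - 27 * a^2 * (s - a) / (2 * s^3)) * z + z^2)"
proof -
  define Q where "Q = 1 - 2 * complex_of_real (1 - 27 * a^2 * (s - a) / (2 * s^3)) * z + z^2"
  have D: "27 * of_real (a ^ 3) * z - 27 * of_real (a ^ 2) * z * of_real s - (1 - z) ^ 2 * of_real (s ^ 3)
     = - of_real (s^3) * Q"
    using s by (simp add: Q_def field_simps power2_eq_square power3_eq_cube)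
  show ?thesis
    unfolding Hker_def D Q_def[symmetric]
    using s by (cases "Q = 0") (simp_all add: field_simps)
qed

theorem theorem7:
  fixes m \<mu> a :: real
    and d :: nat
    and M :: "complex \<Rightarrow> real \<Rightarrow> complex"
    and coef :: "nat \<Rightarrow> real \<Rightarrow> complex"
    and Abs :: "real \<Rightarrow> real \<Rightarrow> real"
    and \<Phi> :: "real \<Rightarrow> real"
    and pw :: "nat \<Rightarrow> real \<Rightarrow> real"
  assumes m_pos: "m > 0" and mu_def: "\<mu> = 4 * m ^ 2"
    and dim: "d \<ge> 4"
    and a_range: "a \<in> {-(2 * \<mu> / 9)<..<0} \<union> {0<..<4 * \<mu> / 9}"
    \<comment> \<open>crossing-symmetric dispersive representation on the unit disk\<close>
    and disp_int: "\<And>z. norm z < 1 \<Longrightarrow>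
        set_integrable lborel {2 * \<mu> / 3..}
          (\<lambda>s. of_real (Abs s (s2plus s a) / s) * Hker a s z)"
    and disp: "\<And>z. norm z < 1 \<Longrightarrow>
        M z a = M 0 a + of_real (1 / pi) *
          (LINT s:{2 * \<mu> / 3..}|lborel. of_real (Abs s (s2plus s a) / s) * Hker a s z)"
    \<comment> \<open>power series expansion in z~, converging on the unit disk\<close>
    and series: "\<And>z. norm z < 1 \<Longrightarrow>
        (\<lambda>n. coef n a * of_real (a ^ (2 * n)) * z ^ n) sums M z a"
    \<comment> \<open>unitarity: partial-wave expansion of the absorptive part\<close>
    and Phi_pos: "\<And>s. s \<ge> 2 * \<mu> / 3 \<Longrightarrow> \<Phi> s > 0"
    and pw_bounds: "\<And>l s. s \<ge> 2 * \<mu> / 3 \<Longrightarrow> 0 \<le> pw l s \<and> pw l s \<le> 1"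
    and unitarity: "\<And>s. s \<ge> 2 * \<mu> / 3 \<Longrightarrow>
        (\<lambda>l. \<Phi> s * ((2 * real l + 2 * ((real d - 3) / 2)) * pw l s
             * gegenbauer l ((real d - 3) / 2) (sqrt (xi \<mu> s a))))
        sums Abs s (s2plus s a)"
    \<comment> \<open>non-trivial (interacting) theory: absorptive part not a.e. zero\<close>
    and nontrivial: "\<not> (AE s in lborel. s \<ge> 2 * \<mu> / 3 \<longrightarrow> Abs s (s2plus s a) = 0)"
  shows "coef 1 a \<noteq> 0 \<and>
    (\<forall>n\<ge>2. norm ((coef n a * of_real (a ^ (2 * n))) / (coef 1 a * of_real (a ^ 2)))
              \<le> real n)"
proof -
  have mu: "\<mu> > 0" using m_pos mu_def by simp
  define S where "S = {2 * \<mu> / 3..}"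
  define g where "g s = Abs s (s2plus s a) / s" for s
  define K where "K s = 27 * a^2 * (2 * s - 3 * a) / s^3" for s
  define t where "t s = 1 - 27 * a^2 * (s - a) / (2 * s^3)" for s
  define w where "w s = complex_of_real (t s) + \<i> * complex_of_real (sqrt (1 - (t s)^2))" for s
  define cc where "cc n s = (\<Sum>i\<le>n. w s ^ i * cnj (w s) ^ (n - i))" for n s
  define F where "F s = indicator S s * (g s * K s)" for s :: real
  have a12: "a > -(2 * \<mu> / 9)" "a < 4 * \<mu> / 9" "a \<noteq> 0" using a_range by auto
  have sS: "s > 0" "s - a > 0" "s + 3 * a > 0" "2 * s - 3 * a > 0" if "s \<in> S" for s
    using that a12 mu by (auto simp: S_def)
  have Kpos: "K s > 0" if "s \<in> S" for s
    using sS[OF that] a12 by (auto simp: K_def intro!: divide_pos_pos mult_pos_pos)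
  have tb: "-1 \<le> t s \<and> t s \<le> 1" if "s \<in> S" for s
  proof -
    define X where "X = 27 * a^2 * (s - a) / s^3"
    have "0 \<le> X" unfolding X_def
      using sS[OF that] by (intro divide_nonneg_pos mult_nonneg_nonneg) auto
    moreover have "X \<le> 4" unfolding X_def using x_bounds(2) sS[OF that] by blast
    moreover have "t s = 1 - X / 2" by (simp add: t_def X_def)
    ultimately show ?thesis by linarith
  qed
  have wRI: "Re (w s) = t s" "Im (w s) = sqrt (1 - (t s)^2)" for s
    by (simp_all add: w_def)
  have wn: "norm (w s) = 1" if "s \<in> S" for s
  proof -
    have "1 - (t s)^2 \<ge> 0" using tb[OF that] abs_square_le_1[of "t s"] by (simp add: abs_le_iff)
    then show ?thesis by (simp add: cmod_def wRI)
  qed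
  have wcn: "norm (cnj (w s)) = 1" if "s \<in> S" for s using wn[OF that] by simp
  have wprod: "w s * cnj (w s) = 1" if "s \<in> S" for s
    using wn[OF that] by (simp add: complex_mult_cnj cmod_def)
  have wsum: "w s + cnj (w s) = 2 * complex_of_real (t s)" for s
    by (simp add: complex_add_cnj wRI)
  have ccb: "norm (cc n s) \<le> real n + 1" if "s \<in> S" for n s
    unfolding cc_def using cc_bound[of "w s" "cnj (w s)" n] wn[OF that] wcn[OF that] by simp
  have cc0: "cc 0 s = 1" for s by (simp add: cc_def)
  have gnn: "g s \<ge> 0" if "s \<in> S" for s
  proof -
    have s: "s \<ge> 2 * \<mu> / 3" using that by (simp add: S_def)
    have al: "(real d - 3) / 2 \<ge> 1/2" using dim by simp
    have xi1: "sqrt (xi \<mu> s a) \<ge> 1" using xi_ge1[OF mu a12(1) a12(2) s] .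
    have "0 \<le> Abs s (s2plus s a)"
    proof (rule sums_le[OF _ sums_zero unitarity[OF s]])
      fix l
      have "0 \<le> gegenbauer l ((real d - 3) / 2) (sqrt (xi \<mu> s a))"
        using geg_nonneg[OF xi1 al] .
      moreover have "0 \<le> 2 * real l + 2 * ((real d - 3) / 2)" using dim by simp
      moreover have "0 \<le> pw l s" "0 < \<Phi> s" using pw_bounds[OF s] Phi_pos[OF s] by auto
      ultimately show "0 \<le> \<Phi> s * ((2 * real l + 2 * ((real d - 3) / 2)) * pw l s
             * gegenbauer l ((real d - 3) / 2) (sqrt (xi \<mu> s a)))"
        by (intro mult_nonneg_nonneg) auto
    qed
    then show ?thesis using sS[OF that] by (simp add: g_def)
  qed
  have Fnn: "F s \<ge> 0" for s
    using gnn Kpos by (cases "s \<in> S") (auto simp: F_def less_imp_le)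
  have Fin: "F s = g s * K s" if "s \<in> S" for s using that by (simp add: F_def)
  have Fout: "F s = 0" if "s \<notin> S" for s using that by (simp add: F_def)
  have Hq: "Hker a s z = - of_real (K s) * z / ((1 - w s * z) * (1 - cnj (w s) * z))"
    if "s \<in> S" for s z
  proof -
    have "(1 - w s * z) * (1 - cnj (w s) * z) = 1 - (w s + cnj (w s)) * z + (w s * cnj (w s)) * z^2"
      by (simp add: algebra_simps power2_eq_square)
    also have "\<dots> = 1 - 2 * complex_of_real (t s) * z + z^2" using wsum[of s] wprod[OF that] by simp
    finally show ?thesis using Hker_eq[of s a z] sS[OF that] by (simp add: K_def t_def)
  qed
  have Hexp: "(\<lambda>n. of_real (-(g s * K s)) * z * (cc n s * z^n)) sums (of_real (g s) * Hker a s z)"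
    if "s \<in> S" "norm z < 1" for s z
  proof -
    have "(\<lambda>n. cc n s * z^n) sums (1 / ((1 - w s * z) * (1 - cnj (w s) * z)))"
      unfolding cc_def using gen_fun[of "w s" "cnj (w s)" z] wn[OF that(1)] wcn[OF that(1)] that(2) by simp
    then have "(\<lambda>n. of_real (-(g s * K s)) * z * (cc n s * z^n)) sums
       (of_real (-(g s * K s)) * z * (1 / ((1 - w s * z) * (1 - cnj (w s) * z))))"
      by (rule sums_mult)
    also have "of_real (-(g s * K s)) * z * (1 / ((1 - w s * z) * (1 - cnj (w s) * z))) = of_real (g s) * Hker a s z"
      using Hq[OF that(1)] by simp
    finally show ?thesis .
  qed
  define G where "G s = indicator S s *\<^sub>R (complex_of_real (g s) * Hker a s (1/2))" for s
  have Gint: "integrable lborel G"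
  proof -
    have "set_integrable lborel {2 * \<mu> / 3..}
          (\<lambda>s. of_real (Abs s (s2plus s a) / s) * Hker a s (1/2))"
      by (rule disp_int) simp
    moreover have "G = (\<lambda>s. indicator {2 * \<mu> / 3..} s *\<^sub>R (of_real (Abs s (s2plus s a) / s) * Hker a s (1/2)))"
      by (simp only: fun_eq_iff G_def S_def g_def) simp
    ultimately show ?thesis by (simp only: set_integrable_def)
  qed
  have Gm: "G \<in> borel_measurable lborel" using Gint by (rule borel_measurable_integrable)
  have Hhalf: "Hker a s (1/2) = complex_of_real (- K s / 2 / (5/4 - t s))" if "s \<in> S" for s
  proof -
    have "Hker a s (1/2) = - of_real (K s) * (1/2) / (1 - 2 * of_real (t s) * (1/2) + (1/2)^2)"
      unfolding K_def t_def using sS[OF that] by (intro Hker_eq) auto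
    also have "1 - 2 * complex_of_real (t s) * (1/2) + (1/2)^2 = complex_of_real (5/4 - t s)"
      by (simp add: power2_eq_square)
    finally show ?thesis by simp
  qed
  have FG: "F s = Re (G s) * (2 * t s - 5/2)" for s
  proof (cases "s \<in> S")
    case True
    have "5/4 - t s > 0" using tb[OF True] by linarith
    then show ?thesis using True by (simp add: F_def G_def Hhalf field_simps)
  next
    case False
    then show ?thesis by (simp add: F_def G_def)
  qed
  have tm: "t \<in> borel_measurable lborel" unfolding t_def by measurable
  have Fm: "F \<in> borel_measurable lborel"
    unfolding FG[abs_def] using Gm tm by measurable
  have Fint: "integrable lborel F"
  proof (rule Bochner_Integration.integrable_bound[OF _ Fm])
    show "integrable lborel (\<lambda>s. 9/2 * Re (G s))" using Gint by simp
    show "AE s in lborel. norm (F s) \<le> norm (9/2 * Re (G s))"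
    proof (rule AE_I2)
      fix s
      show "norm (F s) \<le> norm (9/2 * Re (G s))"
      proof (cases "s \<in> S")
        case True
        have "\<bar>2 * t s - 5/2\<bar> \<le> 9/2" using tb[OF True] by linarith
        then have "\<bar>Re (G s)\<bar> * \<bar>2 * t s - 5/2\<bar> \<le> \<bar>Re (G s)\<bar> * (9/2)"
          by (intro mult_left_mono) auto
        then show ?thesis by (simp add: FG abs_mult)
      next
        case False
        then show ?thesis by (simp add: Fout)
      qed
    qed
  qed
  have ccm: "(\<lambda>s. cc n s) \<in> borel_measurable lborel" for n
  proof -
    have wc: "cnj (w s) = complex_of_real (t s) - \<i> * complex_of_real (sqrt (1 - (t s)^2))" for s
      by (simp add: w_def complex_eq_iff)
    show ?thesis unfolding cc_def wc unfolding w_def using tm by measurable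
  qed
  have nb: "norm (complex_of_real (F s) * cc n s) \<le> (real n + 1) * F s" for n s
  proof (cases "s \<in> S")
    case True
    have "norm (complex_of_real (F s) * cc n s) = F s * norm (cc n s)"
      using Fnn[of s] by (simp add: norm_mult)
    also have "\<dots> \<le> F s * (real n + 1)" using ccb[OF True] Fnn[of s] by (intro mult_left_mono) auto
    finally show ?thesis by (simp add: mult.commute)
  next
    case False
    then show ?thesis by (simp add: Fout)
  qed
  have Ic: "integrable lborel (\<lambda>s. complex_of_real (F s) * cc n s)" for n
  proof (rule Bochner_Integration.integrable_bound)
    show "integrable lborel (\<lambda>s. (real n + 1) * F s)" using Fint by simp
    show "(\<lambda>s. complex_of_real (F s) * cc n s) \<in> borel_measurable lborel"
      using Fm ccm[of n] by measurable
    show "AE s in lborel. norm (complex_of_real (F s) * cc n s) \<le> norm ((real n + 1) * F s)"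
      using Fnn by (intro AE_I2) (simp add: abs_of_nonneg nb)
  qed
  define I where "I n = integral\<^sup>L lborel (\<lambda>s. complex_of_real (F s) * cc n s)" for n
  have coefs: "coef (Suc n) a * of_real (a ^ (2 * Suc n)) = - of_real (1/pi) * I n" for n
  proof -
    define b where "b n = (if n = 0 then M 0 a else - of_real (1/pi) * I (n - 1))" for n
    have bs: "(\<lambda>n. b n * z^n) sums M z a" if z: "norm z < 1" for z
    proof -
      define h where "h n s = (-(z * z^n)) * (complex_of_real (F s) * cc n s)" for n s
      have hs: "(\<lambda>n. h n s) sums (indicator S s *\<^sub>R (of_real (g s) * Hker a s z))" for s
      proof (cases "s \<in> S")
        case True
        have "h n s = of_real (-(g s * K s)) * z * (cc n s * z^n)" for n
          by (simp add: h_def Fin[OF True])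
        then show ?thesis using Hexp[OF True z] True by simp
      next
        case False
        then show ?thesis by (simp add: h_def Fout)
      qed
      have hint: "integrable lborel (h n)" for n
        unfolding h_def using Ic[of n] by simp
      have gs: "summable (\<lambda>n. real (Suc n) * norm z ^ n)"
        using geometric_deriv_sums[of "norm z"] z by (simp add: sums_iff)
      have hb: "norm (h n s) \<le> F s * norm z * (real (Suc n) * norm z ^ n)" for n s
      proof -
        have "norm (h n s) = norm z * norm z ^ n * norm (complex_of_real (F s) * cc n s)"
          by (simp add: h_def norm_mult norm_power)
        also have "\<dots> \<le> norm z * norm z ^ n * ((real n + 1) * F s)"
          by (intro mult_left_mono nb) auto
        finally show ?thesis by (simp add: algebra_simps)
      qed
      have s1: "AE s in lborel. summable (\<lambda>n. norm (h n s))"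
      proof (rule AE_I2)
        fix s
        show "summable (\<lambda>n. norm (h n s))"
          by (rule summable_comparison_test[OF _ summable_mult[OF gs, of "F s * norm z"]])
             (use hb in auto)
      qed
      have s2: "summable (\<lambda>n. integral\<^sup>L lborel (\<lambda>s. norm (h n s)))"
      proof (rule summable_comparison_test[OF _ summable_mult[OF gs, of "integral\<^sup>L lborel F * norm z"]])
        show "\<exists>N. \<forall>n\<ge>N. norm (integral\<^sup>L lborel (\<lambda>s. norm (h n s)))
            \<le> integral\<^sup>L lborel F * norm z * (real (Suc n) * norm z ^ n)"
        proof (intro exI allI impI)
          fix n :: nat
          have "integral\<^sup>L lborel (\<lambda>s. norm (h n s)) \<le> integral\<^sup>L lborel (\<lambda>s. F s * norm z * (real (Suc n) * norm z ^ n))"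
            by (rule integral_mono) (use hint Fint hb in auto)
          also have "\<dots> = integral\<^sup>L lborel F * norm z * (real (Suc n) * norm z ^ n)"
            by simp
          finally show "norm (integral\<^sup>L lborel (\<lambda>s. norm (h n s)))
            \<le> integral\<^sup>L lborel F * norm z * (real (Suc n) * norm z ^ n)"
            by (simp add: abs_of_nonneg)
        qed
      qed
      have "(\<lambda>n. integral\<^sup>L lborel (h n)) sums integral\<^sup>L lborel (\<lambda>s. \<Sum>n. h n s)"
        by (rule sums_integral[OF hint s1 s2])
      also have "integral\<^sup>L lborel (\<lambda>s. \<Sum>n. h n s) = (LINT s:S|lborel. of_real (g s) * Hker a s z)"
        unfolding set_lebesgue_integral_def using hs by (simp add: sums_iff)
      finally have hsum: "(\<lambda>n. integral\<^sup>L lborel (h n)) sums (LINT s:S|lborel. of_real (g s) * Hker a s z)" .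
      have hI: "integral\<^sup>L lborel (h n) = - (z * z^n) * I n" for n
      proof -
        have "h n = (\<lambda>s. (-(z * z^n)) * (complex_of_real (F s) * cc n s))"
          by (simp add: fun_eq_iff h_def)
        then show ?thesis by (simp add: I_def)
      qed
      have bsuc: "(\<lambda>n. b (Suc n) * z ^ Suc n) sums (of_real (1/pi) * (LINT s:S|lborel. of_real (g s) * Hker a s z))"
        using sums_mult[OF hsum, of "of_real (1/pi)"] by (simp add: b_def hI mult.commute)
      have Mz: "M z a = of_real (1/pi) * (LINT s:S|lborel. of_real (g s) * Hker a s z) + b 0 * z ^ 0"
        using disp[OF z] by (simp add: b_def S_def g_def)
      have "(\<lambda>n. b n * z ^ n) sums (of_real (1/pi) * (LINT s:S|lborel. of_real (g s) * Hker a s z) + b 0 * z ^ 0)"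
        using bsuc by (subst sums_Suc_iff[symmetric])
      then show ?thesis using Mz by simp
    qed
    have a0: "(\<lambda>n. coef n a * of_real (a ^ (2 * n)) * z ^ n) sums M z a" if "norm z < 1" for z
      using series[OF that] .
    have "coef (Suc n) a * of_real (a ^ (2 * Suc n)) = b (Suc n)"
      by (rule powser_unique[where f="\<lambda>z. M z a", OF a0 bs])
    then show ?thesis by (simp add: b_def)
  qed
  have I0: "I 0 = complex_of_real (integral\<^sup>L lborel F)"
    by (simp add: I_def cc0)
  have Fpos: "integral\<^sup>L lborel F > 0"
  proof (rule ccontr)
    assume "\<not> integral\<^sup>L lborel F > 0"
    moreover have "integral\<^sup>L lborel F \<ge> 0" using Fnn by (simp add: integral_nonneg)
    ultimately have "integral\<^sup>L lborel F = 0" by simp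
    then have "AE s in lborel. F s = 0"
      using integral_nonneg_eq_0_iff_AE[OF Fint] Fnn by simp
    then have "AE s in lborel. s \<ge> 2 * \<mu> / 3 \<longrightarrow> Abs s (s2plus s a) = 0"
    proof (rule AE_mp[OF _ AE_I2], intro impI)
      fix s assume F0: "F s = 0" and s: "s \<ge> 2 * \<mu> / 3"
      have sS': "s \<in> S" using s by (simp add: S_def)
      have "g s * K s = 0" using F0 Fin[OF sS'] by simp
      then have "g s = 0" using Kpos[OF sS'] by simp
      then show "Abs s (s2plus s a) = 0" using sS(1)[OF sS'] by (simp add: g_def)
    qed
    then show False using nontrivial by simp
  qed
  have Ib: "norm (I n) \<le> (real n + 1) * integral\<^sup>L lborel F" for n
  proof -
    have "norm (I n) \<le> integral\<^sup>L lborel (\<lambda>s. (real n + 1) * F s)"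
      unfolding I_def by (rule Bochner_Integration.integral_norm_bound_integral) (use Ic Fint nb in auto)
    then show ?thesis by simp
  qed
  have c1: "coef 1 a * of_real (a ^ 2) = - of_real (1/pi) * complex_of_real (integral\<^sup>L lborel F)"
    using coefs[of 0] I0 by simp
  have c1n: "coef 1 a * of_real (a ^ 2) \<noteq> 0" using c1 Fpos by simp
  have "norm ((coef n a * of_real (a ^ (2 * n))) / (coef 1 a * of_real (a ^ 2))) \<le> real n"
    if n2: "n \<ge> 2" for n
  proof -
    obtain m where n: "n = Suc m" using n2 by (cases n) auto
    have "norm ((coef n a * of_real (a ^ (2 * n))) / (coef 1 a * of_real (a ^ 2)))
        = norm (I m) / integral\<^sup>L lborel F"
      unfolding n coefs c1 using Fpos by (simp add: norm_divide norm_mult)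
    also have "\<dots> \<le> (real m + 1) * integral\<^sup>L lborel F / integral\<^sup>L lborel F"
      using Ib[of m] Fpos by (intro divide_right_mono) auto
    also have "\<dots> = real n" using Fpos n by simp
    finally show ?thesis .
  qed
  moreover have "coef 1 a \<noteq> 0" using c1n by auto
  ultimately show ?thesis by auto
qed

end
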